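(* Let $E$ be an equivalence relation on $2^\mathbb{N}$. Then $E$ is $\Sigma^0_2$-graphable if and only if $E$ is $\Sigma^0_2$. Moreover, this relativizes: for any real parameter $a$, $E$ is $\Sigma^0_2(a)$-graphable if and only if $E$ is $\Sigma^0_2(a)$.
   Context: For a pointclass $\Gamma$, $E$ is $\Gamma$-graphable if there is a simple undirected graph $G\subseteq 2^\mathbb{N}\times2^\mathbb{N}$ in $\Gamma$ whose connectedness relation (connected by a finite path) equals $E$. $\Sigma^0_2$ is the lightface class. *)

theory Defs
  imports Main
begin

type_synonym cantor = "nat \<Rightarrow> bool"

datatype recf =
    Z
  | S
  | Proj nat
  | Orc nat
  | Cn recf "recf list"
  | Pr recf recf
  | Mn recf

inductive reval :: "cantor list \<Rightarrow> recf \<Rightarrow> nat list \<Rightarrow> nat \<Rightarrow> bool" for os where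
  zero: "reval os Z xs 0"
| succ: "reval os S (x # xs) (Suc x)"
| proj: "i < length xs \<Longrightarrow> reval os (Proj i) xs (xs ! i)"
| orc:  "i < length os \<Longrightarrow> reval os (Orc i) (x # xs) (if (os ! i) x then 1 else 0)"
| cn:   "list_all2 (\<lambda>g y. reval os g xs y) gs ys \<Longrightarrow> reval os f ys z \<Longrightarrow> reval os (Cn f gs) xs z"
| pr0:  "reval os f xs y \<Longrightarrow> reval os (Pr f g) (0 # xs) y"
| prS:  "reval os (Pr f g) (n # xs) y \<Longrightarrow> reval os g (n # y # xs) z
          \<Longrightarrow> reval os (Pr f g) (Suc n # xs) z"
| mn:   "reval os f (n # xs) 0 \<Longrightarrow> (\<forall>m<n. \<exists>k. reval os f (m # xs) (Suc k))
          \<Longrightarrow> reval os (Mn f) xs n"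
monos list_all2_mono

definition halts :: "cantor list \<Rightarrow> recf \<Rightarrow> nat list \<Rightarrow> bool" where
  "halts os f xs \<longleftrightarrow> (\<exists>y. reval os f xs y)"

text \<open>A set P of pairs of reals is Sigma^0_2 relative to the parameter list ps
  (lightface Sigma^0_2 for ps = [], Sigma^0_2(a) for ps = [a]) iff there is an
  oracle machine f such that (x,y) \<in> P iff there exists n such that f with oracles
  ps @ [x, y] does not halt on input n  (i.e. P = exists n. Pi^0_1(ps)).\<close>

definition sigma02 :: "cantor list \<Rightarrow> (cantor \<times> cantor) set \<Rightarrow> bool" where
  "sigma02 ps P \<longleftrightarrow>
     (\<exists>f. \<forall>x y. (x, y) \<in> P \<longleftrightarrow> (\<exists>n. \<not> halts (ps @ [x, y]) f [n]))"

definition graphable :: "((cantor \<times> cantor) set \<Rightarrow> bool) \<Rightarrow> (cantor \<times> cantor) set \<Rightarrow> bool" where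
  "graphable \<Gamma> E \<longleftrightarrow> (\<exists>G. sym G \<and> irrefl G \<and> \<Gamma> G \<and> G\<^sup>* = E)"

end

theory Submission
  imports Defs
begin

definition rc :: "nat \<Rightarrow> nat \<Rightarrow> (cantor list \<Rightarrow> nat list \<Rightarrow> nat) \<Rightarrow> bool" where
  "rc m k F \<longleftrightarrow> (\<exists>c. \<forall>os xs. length os = m \<longrightarrow> length xs = k \<longrightarrow> reval os c xs (F os xs))"

definition rcP :: "nat \<Rightarrow> nat \<Rightarrow> (cantor list \<Rightarrow> nat list \<Rightarrow> bool) \<Rightarrow> bool" where
  "rcP m k P \<longleftrightarrow> rc m k (\<lambda>os xs. if P os xs then 1 else 0)"

lemma rc_cong:
  assumes "rc m k F" "\<And>os xs. length os = m \<Longrightarrow> length xs = k \<Longrightarrow> F os xs = G os xs"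
  shows "rc m k G"
  using assms unfolding rc_def by metis

lemma rcP_cong:
  assumes "rcP m k P" "\<And>os xs. length os = m \<Longrightarrow> length xs = k \<Longrightarrow> P os xs = Q os xs"
  shows "rcP m k Q"
  using assms(1) unfolding rcP_def by (rule rc_cong) (simp add: assms(2))

lemma rc_zero: "rc m k (\<lambda>os xs. 0)"
  unfolding rc_def by (rule exI[of _ Z]) (auto intro: reval.zero)

lemma rc_proj: "i < k \<Longrightarrow> rc m k (\<lambda>os xs. xs ! i)"
  unfolding rc_def by (rule exI[of _ "Proj i"]) (auto intro: reval.proj)

lemma rc_S1: "rc m 1 (\<lambda>os xs. Suc (xs ! 0))"
  unfolding rc_def
proof (rule exI[of _ S], intro allI impI)
  fix os :: "cantor list" and xs :: "nat list" assume "length xs = 1"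
  then obtain x where "xs = [x]" by (cases xs) auto
  then show "reval os S xs (Suc (xs ! 0))" by (auto intro: reval.succ)
qed

lemma rc_orc1: "i < m \<Longrightarrow> rc m 1 (\<lambda>os xs. if (os ! i) (xs ! 0) then 1 else 0)"
  unfolding rc_def
proof (rule exI[of _ "Orc i"], intro allI impI)
  fix os :: "cantor list" and xs :: "nat list" assume "length xs = 1" "i < m" "length os = m"
  moreover from this obtain x where "xs = [x]" by (cases xs) auto
  ultimately show "reval os (Orc i) xs (if (os ! i) (xs ! 0) then 1 else 0)"
    using reval.orc[of i os x "[]"] by auto
qed

lemma rc_cn:
  assumes G: "rc m l G" and Fs: "\<And>i. i < l \<Longrightarrow> rc m k (Fs i)"
  shows "rc m k (\<lambda>os xs. G os (map (\<lambda>i. Fs i os xs) [0..<l]))"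
proof -
  obtain c where c: "\<And>os xs. length os = m \<Longrightarrow> length xs = l \<Longrightarrow> reval os c xs (G os xs)"
    using G unfolding rc_def by blast
  have "\<forall>i. \<exists>c. i < l \<longrightarrow> (\<forall>os xs. length os = m \<longrightarrow> length xs = k \<longrightarrow> reval os c xs (Fs i os xs))"
    using Fs unfolding rc_def by blast
  then obtain cf where cf: "\<And>i os xs. i < l \<Longrightarrow> length os = m \<Longrightarrow> length xs = k \<Longrightarrow> reval os (cf i) xs (Fs i os xs)"
    by metis
  show ?thesis unfolding rc_def
  proof (rule exI[of _ "Cn c (map cf [0..<l])"], intro allI impI)
    fix os :: "cantor list" and xs :: "nat list" assume *: "length os = m" "length xs = k"
    have "list_all2 (\<lambda>g y. reval os g xs y) (map cf [0..<l]) (map (\<lambda>i. Fs i os xs) [0..<l])"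
      using cf * by (auto simp: list_all2_conv_all_nth)
    then show "reval os (Cn c (map cf [0..<l])) xs (G os (map (\<lambda>i. Fs i os xs) [0..<l]))"
      by (rule reval.cn) (use c * in auto)
  qed
qed

lemma rc_cn_list:
  assumes G: "rc m (length Fs) G" and Fs: "\<And>F. F \<in> set Fs \<Longrightarrow> rc m k F"
  shows "rc m k (\<lambda>os xs. G os (map (\<lambda>F. F os xs) Fs))"
proof -
  have "rc m k (\<lambda>os xs. G os (map (\<lambda>i. (Fs ! i) os xs) [0..<length Fs]))"
    by (rule rc_cn[OF G]) (use Fs in auto)
  moreover have "map (\<lambda>i. (Fs ! i) os xs) [0..<length Fs] = map (\<lambda>F. F os xs) Fs" for os xs
    by (rule nth_equalityI) auto
  ultimately show ?thesis by simp
qed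

lemma rc_pr:
  assumes F: "rc m k F" and H: "rc m (Suc (Suc k)) H"
  shows "rc m (Suc k) (\<lambda>os xs. rec_nat (F os (tl xs)) (\<lambda>n y. H os (n # y # tl xs)) (hd xs))"
proof -
  obtain cF where cF: "\<And>os xs. length os = m \<Longrightarrow> length xs = k \<Longrightarrow> reval os cF xs (F os xs)"
    using F unfolding rc_def by blast
  obtain cH where cH: "\<And>os xs. length os = m \<Longrightarrow> length xs = Suc (Suc k) \<Longrightarrow> reval os cH xs (H os xs)"
    using H unfolding rc_def by blast
  show ?thesis unfolding rc_def
  proof (rule exI[of _ "Pr cF cH"], intro allI impI)
    fix os :: "cantor list" and xs :: "nat list" assume *: "length os = m" "length xs = Suc k"
    then obtain n ys where xs: "xs = n # ys" "length ys = k" by (cases xs) auto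
    have "reval os (Pr cF cH) (n # ys) (rec_nat (F os ys) (\<lambda>n y. H os (n # y # ys)) n)"
    proof (induction n)
      case 0 then show ?case using cF[OF *(1) xs(2)] by (auto intro: reval.pr0)
    next
      case (Suc n) then show ?case using cH[OF *(1)] xs(2) by (auto intro: reval.prS)
    qed
    then show "reval os (Pr cF cH) xs (rec_nat (F os (tl xs)) (\<lambda>n y. H os (n # y # tl xs)) (hd xs))"
      using xs by simp
  qed
qed

lemma len1: "length xs = Suc 0 \<Longrightarrow> \<exists>a. xs = [a]"
  by (cases xs) auto
lemma len2: "length xs = 2 \<Longrightarrow> \<exists>a b. xs = [a, b]"
  by (cases xs; cases "tl xs") (auto simp: numeral_2_eq_2)

lemma rc_Suc: "rc m k F \<Longrightarrow> rc m k (\<lambda>os xs. Suc (F os xs))"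
  using rc_cn_list[of m "[F]" "\<lambda>os xs. Suc (xs!0)" k] rc_S1 by simp

lemma rc_comp1: "rc m 1 G \<Longrightarrow> rc m k F \<Longrightarrow> rc m k (\<lambda>os xs. G os [F os xs])"
  using rc_cn_list[of m "[F]" G k] by simp

lemma rc_comp2:
  assumes "rc m 2 G" "rc m k F1" "rc m k F2"
  shows "rc m k (\<lambda>os xs. G os [F1 os xs, F2 os xs])"
proof -
  have "rc m (length [F1, F2]) G" using assms(1) by (simp add: numeral_2_eq_2)
  from rc_cn_list[OF this] assms(2,3) show ?thesis by auto
qed

lemma rc_const: "rc m k (\<lambda>os xs. c)"
  by (induction c) (auto intro: rc_zero rc_Suc)

lemma rc_subst0:
  assumes "rc m (Suc k) F" "rc m k B"
  shows "rc m k (\<lambda>os xs. F os (B os xs # xs))"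
proof -
  have "rc m k (\<lambda>os xs. F os (map (\<lambda>F. F os xs) (B # map (\<lambda>i os xs. xs ! i) [0..<k])))"
    by (rule rc_cn_list) (use assms in \<open>auto intro: rc_proj\<close>)
  then show ?thesis
  proof (rule rc_cong)
    fix os :: "cantor list" and xs :: "nat list" assume "length xs = k"
    then have "map (\<lambda>i. xs ! i) [0..<k] = xs" by (intro nth_equalityI) auto
    then show "F os (map (\<lambda>F. F os xs) (B # map (\<lambda>i os xs. xs ! i) [0..<k])) = F os (B os xs # xs)"
      by (simp add: comp_def)
  qed
qed

lemma rc_reindex:
  assumes "rc m (length is) F" "\<forall>i\<in>set is. i < k"
  shows "rc m k (\<lambda>os xs. F os (map ((!) xs) is))"
proof -
  have "rc m k (\<lambda>os xs. F os (map (\<lambda>F. F os xs) (map (\<lambda>i os xs. xs ! i) is)))"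
    by (rule rc_cn_list) (use assms in \<open>auto intro: rc_proj\<close>)
  then show ?thesis by (simp add: comp_def)
qed

lemma add_rec: "rec_nat b (\<lambda>n y. Suc y) a = a + b" by (induction a) auto

lemma rc_add2: "rc m 2 (\<lambda>os xs. xs!0 + xs!1)"
proof -
  have "rc m (Suc 1) (\<lambda>os xs. rec_nat (tl xs ! 0) (\<lambda>n y. Suc ((n # y # tl xs) ! 1)) (hd xs))"
    using rc_pr[of m 1 "\<lambda>os xs. xs!0" "\<lambda>os xs. Suc (xs!1)"] rc_proj rc_Suc by simp
  from this[unfolded Suc_1] show ?thesis
    by (rule rc_cong) (auto dest!: len2 simp: add_rec)
qed

lemma rc_add: "rc m k F \<Longrightarrow> rc m k G \<Longrightarrow> rc m k (\<lambda>os xs. F os xs + G os xs)"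
  using rc_comp2[OF rc_add2] by simp

lemma mult_rec: "rec_nat 0 (\<lambda>n y. y + b) a = a * b" by (induction a) auto

lemma rc_mult2: "rc m 2 (\<lambda>os xs. xs!0 * xs!1)"
proof -
  have "rc m (Suc 1) (\<lambda>os xs. rec_nat 0 (\<lambda>n y. (n # y # tl xs) ! 1 + (n # y # tl xs) ! 2) (hd xs))"
    using rc_pr[of m 1 "\<lambda>os xs. 0" "\<lambda>os xs. xs!1 + xs!2"] rc_proj rc_add rc_zero by simp
  from this[unfolded Suc_1] show ?thesis
    by (rule rc_cong) (auto dest!: len2 simp: mult_rec)
qed

lemma rc_mult: "rc m k F \<Longrightarrow> rc m k G \<Longrightarrow> rc m k (\<lambda>os xs. F os xs * G os xs)"
  using rc_comp2[OF rc_mult2] by simp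

lemma pred_rec: "rec_nat 0 (\<lambda>n y. n) a = a - 1" by (cases a) auto

lemma rc_pred1: "rc m 1 (\<lambda>os xs. xs!0 - 1)"
proof -
  have "rc m (Suc 0) (\<lambda>os xs. rec_nat 0 (\<lambda>n y. (n # y # tl xs) ! 0) (hd xs))"
    using rc_pr[of m 0 "\<lambda>os xs. 0" "\<lambda>os xs. xs!0"] rc_proj rc_zero by simp
  from this[folded One_nat_def] show ?thesis
    by (rule rc_cong) (auto dest!: len1 simp: pred_rec)
qed

lemma rc_pred: "rc m k F \<Longrightarrow> rc m k (\<lambda>os xs. F os xs - 1)"
  using rc_comp1[OF rc_pred1] by simp

lemma diff_rec: "rec_nat a (\<lambda>n y. y - Suc 0) b = a - b" by (induction b) auto

lemma rc_diff2: "rc m 2 (\<lambda>os xs. xs!1 - xs!0)"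
proof -
  have "rc m (Suc 1) (\<lambda>os xs. rec_nat (tl xs ! 0) (\<lambda>n y. (n # y # tl xs) ! 1 - 1) (hd xs))"
    using rc_pr[of m 1 "\<lambda>os xs. xs!0" "\<lambda>os xs. xs!1 - 1"] rc_proj rc_pred by simp
  from this[unfolded Suc_1] show ?thesis
    by (rule rc_cong) (auto dest!: len2 simp: diff_rec)
qed

lemma rc_diff: assumes "rc m k F" "rc m k G" shows "rc m k (\<lambda>os xs. F os xs - G os xs)"
  using rc_comp2[OF rc_diff2 assms(2) assms(1)] by simp

lemma pow_rec: "rec_nat (Suc 0) (\<lambda>n y. y + y) a = (2::nat) ^ a" by (induction a) auto

lemma rc_pow2_1: "rc m 1 (\<lambda>os xs. 2 ^ (xs!0))"
proof -
  have "rc m (Suc 0) (\<lambda>os xs. rec_nat 1 (\<lambda>n y. (n # y # tl xs) ! 1 + (n # y # tl xs) ! 1) (hd xs))"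
    using rc_pr[of m 0 "\<lambda>os xs. 1" "\<lambda>os xs. xs!1 + xs!1"] rc_proj rc_add rc_const by simp
  from this[folded One_nat_def] show ?thesis
    by (rule rc_cong) (auto dest!: len1 simp: pow_rec)
qed

lemma rc_pow2: "rc m k F \<Longrightarrow> rc m k (\<lambda>os xs. 2 ^ F os xs)"
  using rc_comp1[OF rc_pow2_1] by simp

lemma par_rec: "rec_nat 0 (\<lambda>n y. Suc 0 - y) a = a mod (2::nat)" by (induction a) (auto simp: mod_Suc)

lemma rc_par1: "rc m 1 (\<lambda>os xs. xs!0 mod 2)"
proof -
  have "rc m (Suc 0) (\<lambda>os xs. rec_nat 0 (\<lambda>n y. 1 - (n # y # tl xs) ! 1) (hd xs))"
    using rc_pr[of m 0 "\<lambda>os xs. 0" "\<lambda>os xs. 1 - xs!1"] rc_proj rc_diff rc_const by simp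
  from this[folded One_nat_def] show ?thesis
    by (rule rc_cong) (auto dest!: len1 simp: par_rec)
qed

lemma rc_mod2: "rc m k F \<Longrightarrow> rc m k (\<lambda>os xs. F os xs mod 2)"
  using rc_comp1[OF rc_par1] by simp

lemma half_rec: "rec_nat 0 (\<lambda>n y. y + n mod 2) a = a div (2::nat)"
proof (induction a)
  case (Suc a) then show ?case
    by (cases "even a") (simp_all add: even_Suc_div_two odd_Suc_div_two even_iff_mod_2_eq_zero odd_iff_mod_2_eq_one)
qed simp

lemma rc_half1: "rc m 1 (\<lambda>os xs. xs!0 div 2)"
proof -
  have "rc m (Suc 0) (\<lambda>os xs. rec_nat 0 (\<lambda>n y. (n # y # tl xs) ! 1 + (n # y # tl xs) ! 0 mod 2) (hd xs))"
    using rc_pr[of m 0 "\<lambda>os xs. 0" "\<lambda>os xs. xs!1 + xs!0 mod 2"] rc_proj rc_add rc_mod2 rc_const by simp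
  from this[folded One_nat_def] show ?thesis
    by (rule rc_cong) (auto dest!: len1 simp: half_rec)
qed

lemma sh_rec: "rec_nat e (\<lambda>n y. y div 2) p = e div (2::nat) ^ p"
proof (induction p)
  case (Suc p)
  have "e div 2 ^ Suc p = e div 2 ^ p div 2" by (simp add: div_mult2_eq[symmetric] mult.commute)
  with Suc show ?case by simp
qed simp

lemma rc_sh2: "rc m 2 (\<lambda>os xs. xs!1 div 2 ^ (xs!0))"
proof -
  have "rc m (Suc 1) (\<lambda>os xs. rec_nat (tl xs ! 0) (\<lambda>n y. (n # y # tl xs) ! 1 div 2) (hd xs))"
    using rc_pr[of m 1 "\<lambda>os xs. xs!0" "\<lambda>os xs. xs!1 div 2"] rc_proj rc_comp1[OF rc_half1] by simp
  from this[unfolded Suc_1] show ?thesis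
    by (rule rc_cong) (auto dest!: len2 simp: sh_rec)
qed

lemma rc_divpow: assumes "rc m k F" "rc m k G" shows "rc m k (\<lambda>os xs. F os xs div 2 ^ G os xs)"
  using rc_comp2[OF rc_sh2 assms(2) assms(1)] by simp

lemma rcP_eq:
  assumes F: "rc m k F" and G: "rc m k G"
  shows "rcP m k (\<lambda>os xs. F os xs = G os xs)"
proof -
  have "rc m k (\<lambda>os xs. 1 - ((F os xs - G os xs) + (G os xs - F os xs)))"
    by (intro rc_diff rc_add rc_const F G)
  then show ?thesis unfolding rcP_def by (rule rc_cong) auto
qed

lemma rcP_less:
  assumes F: "rc m k F" and G: "rc m k G"
  shows "rcP m k (\<lambda>os xs. F os xs < G os xs)"
proof -
  have "rc m k (\<lambda>os xs. 1 - (1 - (G os xs - F os xs)))"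
    by (intro rc_diff rc_add rc_const F G)
  then show ?thesis unfolding rcP_def by (rule rc_cong) auto
qed

lemma rcP_le:
  assumes F: "rc m k F" and G: "rc m k G"
  shows "rcP m k (\<lambda>os xs. F os xs \<le> G os xs)"
proof -
  have "rcP m k (\<lambda>os xs. F os xs < Suc (G os xs))"
    by (intro rcP_less rc_Suc F G)
  then show ?thesis by (rule rcP_cong) auto
qed

lemma rcP_not:
  assumes P: "rcP m k P" shows "rcP m k (\<lambda>os xs. \<not> P os xs)"
proof -
  have "rc m k (\<lambda>os xs. 1 - (if P os xs then 1 else 0))"
    by (intro rc_diff rc_const P[unfolded rcP_def])
  then show ?thesis unfolding rcP_def by (rule rc_cong) auto
qed

lemma rcP_and:
  assumes P: "rcP m k P" and Q: "rcP m k Q" shows "rcP m k (\<lambda>os xs. P os xs \<and> Q os xs)"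
proof -
  have "rc m k (\<lambda>os xs. (if P os xs then 1 else 0) * (if Q os xs then 1 else 0))"
    by (intro rc_mult P[unfolded rcP_def] Q[unfolded rcP_def])
  then show ?thesis unfolding rcP_def by (rule rc_cong) auto
qed

lemma rcP_or:
  assumes P: "rcP m k P" and Q: "rcP m k Q" shows "rcP m k (\<lambda>os xs. P os xs \<or> Q os xs)"
proof -
  have "rcP m k (\<lambda>os xs. \<not> (\<not> P os xs \<and> \<not> Q os xs))"
    by (intro rcP_not rcP_and P Q)
  then show ?thesis by (rule rcP_cong) auto
qed

lemma rcP_imp:
  assumes P: "rcP m k P" and Q: "rcP m k Q" shows "rcP m k (\<lambda>os xs. P os xs \<longrightarrow> Q os xs)"
proof -
  have "rcP m k (\<lambda>os xs. \<not> P os xs \<or> Q os xs)"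
    by (intro rcP_not rcP_or P Q)
  then show ?thesis by (rule rcP_cong) auto
qed

lemma rcP_const: "rcP m k (\<lambda>os xs. b)"
  unfolding rcP_def using rc_const by simp

lemma rc_if:
  assumes P: "rcP m k P" and F: "rc m k F" and G: "rc m k G"
  shows "rc m k (\<lambda>os xs. if P os xs then F os xs else G os xs)"
proof -
  have "rc m k (\<lambda>os xs. (if P os xs then 1 else 0) * F os xs + (1 - (if P os xs then 1 else 0)) * G os xs)"
    by (intro rc_add rc_mult rc_diff rc_const P[unfolded rcP_def] F G)
  then show ?thesis by (rule rc_cong) auto
qed

lemma rcP_orc: "i < m \<Longrightarrow> rc m k F \<Longrightarrow> rcP m k (\<lambda>os xs. (os ! i) (F os xs))"
  unfolding rcP_def using rc_comp1[OF rc_orc1] by simp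

lemma rcP_bit:
  assumes F: "rc m k F" and G: "rc m k G"
  shows "rcP m k (\<lambda>os xs. bit (F os xs) (G os xs))"
proof -
  have "rcP m k (\<lambda>os xs. (F os xs div 2 ^ G os xs) mod 2 = 1)"
    by (intro rcP_eq rc_mod2 rc_divpow rc_const F G)
  then show ?thesis by (rule rcP_cong) (auto simp: bit_iff_odd odd_iff_mod_2_eq_one)
qed

lemma sum_rec: "rec_nat 0 (\<lambda>n y. y + F n) a = (\<Sum>i<a. F i)" by (induction a) auto

lemma rc_bsum:
  assumes F: "rc m (Suc k) F" and B: "rc m k B"
  shows "rc m k (\<lambda>os xs. \<Sum>i<B os xs. F os (i # xs))"
proof -
  define js where "js = 0 # [2..<Suc (Suc k)]"
  have ljs: "length js = Suc k" unfolding js_def by (simp del: upt_Suc)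
  have sjs: "\<forall>i\<in>set js. i < Suc (Suc k)" unfolding js_def by (simp del: upt_Suc)
  have mjs: "map ((!) (n # y # ys)) js = n # ys" if "length ys = k" for n y :: nat and ys :: "nat list"
  proof -
    have e: "[2..<Suc (Suc k)] = map (\<lambda>i. Suc (Suc i)) [0..<k]"
      using map_add_upt[of 2 k] by (simp add: add.commute)
    have "map ((!) ys) [0..<k] = ys" using map_nth[of ys] that by simp
    then show ?thesis unfolding js_def e by (simp add: comp_def)
  qed
  have F2: "rc m (Suc (Suc k)) (\<lambda>os xs. F os (map ((!) xs) js))"
    using rc_reindex[of m js F "Suc (Suc k)"] ljs sjs F by simp
  have H: "rc m (Suc (Suc k)) (\<lambda>os xs. xs!1 + F os (map ((!) xs) js))"
    by (intro rc_add rc_proj F2) simp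
  from rc_pr[OF rc_zero H]
  have "rc m (Suc k) (\<lambda>os xs. \<Sum>i<hd xs. F os (i # tl xs))"
  proof (rule rc_cong)
    fix os :: "cantor list" and xs :: "nat list" assume "length xs = Suc k"
    then have "length (tl xs) = k" by simp
    then show "rec_nat 0 (\<lambda>n y. (n # y # tl xs) ! 1 + F os (map ((!) (n # y # tl xs)) js)) (hd xs)
       = (\<Sum>i<hd xs. F os (i # tl xs))"
      by (simp add: mjs sum_rec)
  qed
  from rc_subst0[OF this B] show ?thesis by simp
qed

lemma sum_ind_pos: "(0 < (\<Sum>i<(n::nat). if P i then 1 else 0::nat)) \<longleftrightarrow> (\<exists>i<n. P i)"
  by (induction n) (auto simp: less_Suc_eq)

lemma rcP_bex:
  assumes "rcP m (Suc k) P" "rc m k B"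
  shows "rcP m k (\<lambda>os xs. \<exists>i<B os xs. P os (i # xs))"
proof -
  have "rcP m k (\<lambda>os xs. 0 < (\<Sum>i<B os xs. if P os (i # xs) then 1 else 0::nat))"
    by (intro rcP_less rc_zero rc_bsum[OF assms(1)[unfolded rcP_def] assms(2)])
  then show ?thesis by (rule rcP_cong) (simp only: sum_ind_pos)
qed

lemma rcP_ball:
  assumes "rcP m (Suc k) P" "rc m k B"
  shows "rcP m k (\<lambda>os xs. \<forall>i<B os xs. P os (i # xs))"
  by (rule rcP_cong[OF rcP_not[OF rcP_bex[OF rcP_not[OF assms(1)] assms(2)]]]) auto

primrec ceval :: "recf \<Rightarrow> nat \<Rightarrow> cantor list \<Rightarrow> nat list \<Rightarrow> nat option" where
  "ceval Z t os xs = Some 0"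
| "ceval S t os xs = (case xs of [] \<Rightarrow> None | x # _ \<Rightarrow> Some (Suc x))"
| "ceval (Proj i) t os xs = (if i < length xs then Some (xs ! i) else None)"
| "ceval (Orc i) t os xs = (case xs of [] \<Rightarrow> None | x # _ \<Rightarrow>
      if i < length os \<and> x < t then Some (if (os ! i) x then 1 else 0) else None)"
| "ceval (Cn f gs) t os xs = (if None \<in> set (map (\<lambda>g. ceval g t os xs) gs) then None
      else ceval f t os (map (\<lambda>g. the (ceval g t os xs)) gs))"
| "ceval (Pr f g) t os xs = (case xs of [] \<Rightarrow> None | n # ys \<Rightarrow>
      rec_nat (ceval f t os ys) (\<lambda>k r. case r of None \<Rightarrow> None | Some y \<Rightarrow> ceval g t os (k # y # ys)) n)"
| "ceval (Mn f) t os xs = (if \<exists>n<t. ceval f t os (n # xs) = Some 0 \<and> (\<forall>m<n. \<exists>k. ceval f t os (m # xs) = Some (Suc k))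
      then Some (\<Sum>m<t. if \<forall>m'\<le>m. \<exists>k. ceval f t os (m' # xs) = Some (Suc k) then 1 else 0) else None)"

lemma sum_lt_min: "(\<Sum>m<t. if m < n then 1 else 0::nat) = min n t"
  by (induction t) auto

lemma mn_count:
  assumes "\<forall>m<n. P m" "\<not> P n" "n < t"
  shows "(\<Sum>m<t. if \<forall>m'\<le>m. P m' then 1 else 0::nat) = n"
proof -
  have "(\<Sum>m<t. if \<forall>m'\<le>m. P m' then 1 else 0::nat) = (\<Sum>m<t. if m < n then 1 else 0)"
  proof (rule sum.cong)
    fix m assume "m \<in> {..<t}"
    have "(\<forall>m'\<le>m. P m') \<longleftrightarrow> m < n"
      using assms(1,2) by (meson le_less_trans less_le_not_le nat_le_linear)
    then show "(if \<forall>m'\<le>m. P m' then 1 else 0::nat) = (if m < n then 1 else 0)" by simp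
  qed simp
  also have "\<dots> = n" using sum_lt_min assms(3) by simp
  finally show ?thesis .
qed

lemma ceval_mono:
  "ceval f t os xs = Some y \<Longrightarrow> t \<le> t' \<Longrightarrow> ceval f t' os xs = Some y"
proof (induction f arbitrary: xs y)
  case Z then show ?case by simp
next
  case S then show ?case by simp
next
  case (Proj i) then show ?case by simp
next
  case (Orc i) then show ?case by (auto split: list.splits if_splits)
next
  case (Cn f gs)
  have nn: "None \<notin> set (map (\<lambda>g. ceval g t os xs) gs)" using Cn.prems by (auto split: if_splits)
  have eq: "map (\<lambda>g. ceval g t' os xs) gs = map (\<lambda>g. ceval g t os xs) gs"
  proof (rule map_cong)
    fix g assume g: "g \<in> set gs"
    then obtain v where "ceval g t os xs = Some v" using nn by (cases "ceval g t os xs") force+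
    then show "ceval g t' os xs = ceval g t os xs" using Cn.IH(2)[OF g] Cn.prems(2) by simp
  qed simp
  have fy: "ceval f t os (map (\<lambda>g. the (ceval g t os xs)) gs) = Some y"
    using Cn.prems nn by (auto split: if_splits)
  have eq2: "map (\<lambda>g. the (ceval g t' os xs)) gs = map (\<lambda>g. the (ceval g t os xs)) gs"
    using arg_cong[OF eq, of "map the"] by (simp add: comp_def)
  have nn': "None \<notin> set (map (\<lambda>g. ceval g t' os xs) gs)" using eq nn by metis
  from Cn.IH(1)[OF fy Cn.prems(2)] show ?case
    by (simp only: ceval.simps eq2 nn' if_False)
next
  case (Pr f g)
  then obtain n ys where xs: "xs = n # ys" by (cases xs) auto
  have "rec_nat (ceval f t' os ys) (\<lambda>k r. case r of None \<Rightarrow> None | Some y \<Rightarrow> ceval g t' os (k # y # ys)) n = Some y"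
    if "rec_nat (ceval f t os ys) (\<lambda>k r. case r of None \<Rightarrow> None | Some y \<Rightarrow> ceval g t os (k # y # ys)) n = Some y" for y
    using that
  proof (induction n arbitrary: y)
    case 0 then show ?case using Pr.IH(1) Pr.prems(2) by simp
  next
    case (Suc n)
    then obtain y' where y': "rec_nat (ceval f t os ys) (\<lambda>k r. case r of None \<Rightarrow> None | Some y \<Rightarrow> ceval g t os (k # y # ys)) n = Some y'"
      and gy: "ceval g t os (n # y' # ys) = Some y" by (auto split: option.splits)
    show ?case using Suc.IH[OF y'] Pr.IH(2)[OF gy Pr.prems(2)] by simp
  qed
  then show ?case using Pr.prems xs by simp
next
  case (Mn f)
  let ?C = "\<lambda>t n. ceval f t os (n # xs) = Some 0 \<and> (\<forall>m<n. \<exists>k. ceval f t os (m # xs) = Some (Suc k))"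
  obtain n where n: "n < t" "?C t n" using Mn.prems by (auto split: if_splits)
  have y: "y = n"
    using Mn.prems n mn_count[of n "\<lambda>m'. \<exists>k. ceval f t os (m' # xs) = Some (Suc k)" t]
    by (auto split: if_splits)
  have C': "?C t' n" using n Mn.IH Mn.prems(2) by blast
  have "n < t'" using n Mn.prems(2) by simp
  moreover have "(\<Sum>m<t'. if \<forall>m'\<le>m. \<exists>k. ceval f t' os (m' # xs) = Some (Suc k) then 1 else 0) = n"
    by (rule mn_count) (use C' \<open>n < t'\<close> in auto)
  ultimately show ?case using C' y by auto
qed

lemma ceval_cong:
  assumes "length os = length os'" "\<And>i x. i < length os \<Longrightarrow> x < t \<Longrightarrow> (os ! i) x = (os' ! i) x"
  shows "ceval f t os xs = ceval f t os' xs"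
proof (induction f arbitrary: xs)
  case (Orc i) then show ?case using assms by (auto split: list.splits)
next
  case (Cn f gs)
  have eq: "map (\<lambda>g. ceval g t os xs) gs = map (\<lambda>g. ceval g t os' xs) gs"
    by (rule map_cong) (use Cn.IH(2) in auto)
  have eq2: "map (\<lambda>g. the (ceval g t os xs)) gs = map (\<lambda>g. the (ceval g t os' xs)) gs"
    using arg_cong[OF eq, of "map the"] by (simp add: comp_def)
  show ?case by (simp only: ceval.simps eq eq2 Cn.IH(1))
next
  case (Pr f g) then show ?case by (simp split: list.splits)
next
  case (Mn f) then show ?case by (simp; blast)
qed simp_all

lemma ceval_sound:
  "ceval f t os xs = Some y \<Longrightarrow> reval os f xs y"
proof (induction f arbitrary: xs y)
  case Z then show ?case by (auto intro: reval.zero)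
next
  case S then show ?case by (auto split: list.splits intro: reval.succ)
next
  case (Proj i) then show ?case by (auto split: if_splits intro: reval.proj)
next
  case (Orc i)
  then obtain x xs' where "xs = x # xs'" "i < length os" "y = (if (os!i) x then 1 else 0)"
    by (auto split: list.splits if_splits)
  then show ?case using reval.orc[of i os x xs'] by simp
next
  case (Cn f gs)
  have nn: "None \<notin> set (map (\<lambda>g. ceval g t os xs) gs)" using Cn.prems by (auto split: if_splits)
  have fy: "ceval f t os (map (\<lambda>g. the (ceval g t os xs)) gs) = Some y"
    using Cn.prems nn by (auto split: if_splits)
  have "list_all2 (\<lambda>g y. reval os g xs y) gs (map (\<lambda>g. the (ceval g t os xs)) gs)"
  proof (unfold list_all2_conv_all_nth, intro conjI allI impI)
    fix i assume i: "i < length gs"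
    then have "gs ! i \<in> set gs" by simp
    moreover have "ceval (gs ! i) t os xs \<in> set (map (\<lambda>g. ceval g t os xs) gs)"
      using i by simp
    then have "ceval (gs ! i) t os xs \<noteq> None" using nn by metis
    ultimately show "reval os (gs ! i) xs (map (\<lambda>g. the (ceval g t os xs)) gs ! i)"
      using Cn.IH(2) i by auto
  qed simp
  then show ?case using Cn.IH(1)[OF fy] by (rule reval.cn)
next
  case (Pr f g)
  then obtain n ys where xs: "xs = n # ys" by (cases xs) auto
  have "reval os (Pr f g) (n # ys) y"
    if "rec_nat (ceval f t os ys) (\<lambda>k r. case r of None \<Rightarrow> None | Some y \<Rightarrow> ceval g t os (k # y # ys)) n = Some y" for y
    using that
  proof (induction n arbitrary: y)
    case 0 then show ?case using Pr.IH(1) by (auto intro: reval.pr0)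
  next
    case (Suc n)
    then obtain y' where y': "rec_nat (ceval f t os ys) (\<lambda>k r. case r of None \<Rightarrow> None | Some y \<Rightarrow> ceval g t os (k # y # ys)) n = Some y'"
      and gy: "ceval g t os (n # y' # ys) = Some y" by (auto split: option.splits)
    show ?case using Suc.IH[OF y'] Pr.IH(2)[OF gy] by (rule reval.prS)
  qed
  then show ?case using Pr.prems xs by simp
next
  case (Mn f)
  obtain n where n: "n < t" "ceval f t os (n # xs) = Some 0" "\<forall>m<n. \<exists>k. ceval f t os (m # xs) = Some (Suc k)"
    using Mn.prems by (auto split: if_splits)
  have y: "y = n"
    using Mn.prems n mn_count[of n "\<lambda>m'. \<exists>k. ceval f t os (m' # xs) = Some (Suc k)" t]
    by (auto split: if_splits)
  have "\<exists>k. reval os f (m # xs) (Suc k)" if mn: "m < n" for m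
  proof -
    obtain k where "ceval f t os (m # xs) = Some (Suc k)" using n(3) mn by blast
    then show ?thesis using Mn.IH by blast
  qed
  then show ?case unfolding y
    by (intro reval.mn Mn.IH[OF n(2)]) blast
qed

lemma bounded_T:
  assumes "\<forall>m<n. \<exists>t. ceval f t os (m # xs) = Some (v m)"
  shows "\<exists>T. \<forall>m<n. ceval f T os (m # xs) = Some (v m)"
  using assms
proof (induction n)
  case (Suc n)
  then obtain T where T: "\<forall>m<n. ceval f T os (m # xs) = Some (v m)" by auto
  obtain t where t: "ceval f t os (n # xs) = Some (v n)" using Suc.prems by auto
  have "ceval f (max T t) os (m # xs) = Some (v m)" if "m < Suc n" for m
  proof (cases "m < n")
    case True then show ?thesis using T ceval_mono[of f T os "m#xs" "v m" "max T t"] by simp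
  next
    case False then have "m = n" using that by simp
    then show ?thesis using t ceval_mono[of f t os "n#xs" "v n" "max T t"] by simp
  qed
  then show ?case by blast
qed simp

lemma list_T:
  assumes "list_all2 (\<lambda>g y. \<exists>t. ceval g t os xs = Some y) gs ys"
  shows "\<exists>T. list_all2 (\<lambda>g y. ceval g T os xs = Some y) gs ys"
  using assms
proof (induction rule: list_all2_induct)
  case Nil then show ?case by simp
next
  case (Cons g gs y ys)
  then obtain T t where T: "list_all2 (\<lambda>g y. ceval g T os xs = Some y) gs ys"
    and t: "ceval g t os xs = Some y" by auto
  have "list_all2 (\<lambda>g y. ceval g (max T t) os xs = Some y) gs ys"
    using T by (rule list_all2_mono) (erule ceval_mono, simp)
  moreover have "ceval g (max T t) os xs = Some y" using t by (rule ceval_mono) simp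
  ultimately show ?case by blast
qed

lemma ceval_complete:
  "reval os f xs y \<Longrightarrow> \<exists>t. ceval f t os xs = Some y"
proof (induction rule: reval.induct)
  case (orc i x xs) then show ?case by (intro exI[of _ "Suc x"]) simp
next
  case (cn xs gs ys f z)
  have "list_all2 (\<lambda>g y. \<exists>t. ceval g t os xs = Some y) gs ys"
    using cn.IH(1) by (rule list_all2_mono) auto
  then obtain T where T: "list_all2 (\<lambda>g y. ceval g T os xs = Some y) gs ys" using list_T by blast
  obtain t where t: "ceval f t os ys = Some z" using cn.IH by blast
  have T': "list_all2 (\<lambda>g y. ceval g (max T t) os xs = Some y) gs ys"
    using T by (rule list_all2_mono) (erule ceval_mono, simp)
  have m: "map (\<lambda>g. ceval g (max T t) os xs) gs = map Some ys"
    using T' by (simp add: list_all2_conv_all_nth list_eq_iff_nth_eq)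
  have "None \<notin> set (map (\<lambda>g. ceval g (max T t) os xs) gs)" unfolding m by auto
  moreover have "map (\<lambda>g. the (ceval g (max T t) os xs)) gs = ys"
    using arg_cong[OF m, of "map the"] by (simp add: comp_def)
  ultimately have "ceval (Cn f gs) (max T t) os xs = Some z"
    using ceval_mono[OF t] by simp
  then show ?case by blast
next
  case (prS f g n xs y z)
  obtain t1 where t1: "ceval (Pr f g) t1 os (n # xs) = Some y" using prS.IH(1) by blast
  obtain t2 where t2: "ceval g t2 os (n # y # xs) = Some z" using prS.IH(2) by blast
  have "ceval (Pr f g) (max t1 t2) os (n # xs) = Some y" using ceval_mono[OF t1] by simp
  moreover have "ceval g (max t1 t2) os (n # y # xs) = Some z" using ceval_mono[OF t2] by simp
  ultimately have "ceval (Pr f g) (max t1 t2) os (Suc n # xs) = Some z" by simp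
  then show ?case by blast
next
  case (mn f n xs)
  obtain t0 where t0: "ceval f t0 os (n # xs) = Some 0" using mn(2) by blast
  have "\<forall>m<n. \<exists>k t. ceval f t os (m # xs) = Some (Suc k)" using mn(3) by blast
  then obtain v where "\<forall>m<n. \<exists>t. ceval f t os (m # xs) = Some (Suc (v m))" by metis
  then obtain T where T: "\<forall>m<n. ceval f T os (m # xs) = Some (Suc (v m))"
    using bounded_T[of n f os xs "\<lambda>m. Suc (v m)"] by blast
  define T' where "T' = max (max T t0) (Suc n)"
  have a: "ceval f T' os (n # xs) = Some 0" using ceval_mono[OF t0] unfolding T'_def by simp
  have b: "\<forall>m<n. ceval f T' os (m # xs) = Some (Suc (v m))"
    using T unfolding T'_def by (auto intro: ceval_mono[of f T os _ _ "max (max T t0) (Suc n)"])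
  have c: "n < T'" unfolding T'_def by simp
  have "(\<Sum>m<T'. if \<forall>m'\<le>m. \<exists>k. ceval f T' os (m' # xs) = Some (Suc k) then 1 else 0) = n"
    by (rule mn_count) (use a b c in auto)
  then have "ceval (Mn f) T' os xs = Some n" using a b c by auto
  then show ?case by blast
next
  case (zero xs) show ?case by simp
next
  case (succ x xs) show ?case by simp
next
  case (proj i xs) then show ?case by simp
next
  case (pr0 f xs y g) then show ?case by simp
qed

lemma reval_det: "reval os f xs y1 \<Longrightarrow> reval os f xs y2 \<Longrightarrow> y1 = y2"
proof -
  assume "reval os f xs y1" "reval os f xs y2"
  then obtain t1 t2 where "ceval f t1 os xs = Some y1" "ceval f t2 os xs = Some y2"
    using ceval_complete by blast
  then have "ceval f (max t1 t2) os xs = Some y1" "ceval f (max t1 t2) os xs = Some y2"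
    by (auto elim: ceval_mono)
  then show ?thesis by simp
qed

lemma halts_ceval: "halts os f xs \<longleftrightarrow> (\<exists>t. ceval f t os xs \<noteq> None)"
  unfolding halts_def using ceval_complete ceval_sound by blast

definition enc :: "nat option \<Rightarrow> nat" where
  "enc r = (case r of None \<Rightarrow> 0 | Some y \<Rightarrow> Suc y)"

lemma enc_simps[simp]: "enc None = 0" "enc (Some y) = Suc y"
  by (simp_all add: enc_def)

lemma enc_0_iff: "enc r = 0 \<longleftrightarrow> r = None"
  by (cases r) auto

definition Sim :: "(cantor list \<Rightarrow> nat list \<Rightarrow> cantor list) \<Rightarrow> recf \<Rightarrow> nat \<Rightarrow> cantor list \<Rightarrow> nat list \<Rightarrow> nat" where
  "Sim Os g L os a = enc (ceval g (a ! L) (Os os (drop (Suc L) a)) (take L a))"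

lemma map_nth_drop: "n \<le> length a \<Longrightarrow> map ((!) a) [n..<length a] = drop n a"
  by (rule nth_equalityI) auto

lemma rc_drop1:
  assumes F: "rc m (Suc k) F"
  shows "rc m (Suc (Suc k)) (\<lambda>os c. F os (c ! 0 # drop 2 c))"
proof -
  define js where "js = 0 # [2..<Suc (Suc k)]"
  have ljs: "length js = Suc k" unfolding js_def by (simp del: upt_Suc)
  have sjs: "\<forall>i\<in>set js. i < Suc (Suc k)" unfolding js_def by (simp del: upt_Suc)
  have "rc m (Suc (Suc k)) (\<lambda>os c. F os (map ((!) c) js))"
    using rc_reindex[of m js F "Suc (Suc k)"] ljs sjs F by simp
  then show ?thesis
  proof (rule rc_cong)
    fix os :: "cantor list" and c :: "nat list" assume "length c = Suc (Suc k)"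
    then have "map ((!) c) [2..<Suc (Suc k)] = drop 2 c" using map_nth_drop[of 2 c] by simp
    then show "F os (map ((!) c) js) = F os (c ! 0 # drop 2 c)" unfolding js_def by simp
  qed
qed

lemma rcP_all_list:
  "(\<And>g. g \<in> set gs \<Longrightarrow> rc m k (F g)) \<Longrightarrow> rcP m k (\<lambda>os a. \<forall>g\<in>set gs. F g os a \<noteq> 0)"
proof (induction gs)
  case Nil then show ?case using rcP_const[of m k True] by simp
next
  case (Cons g gs)
  have "rcP m k (\<lambda>os a. \<not> F g os a = 0 \<and> (\<forall>g\<in>set gs. F g os a \<noteq> 0))"
    by (intro rcP_and rcP_not rcP_eq rc_const Cons.IH Cons.prems) auto
  then show ?case by simp
qed

lemma enc_rec:
  "enc (rec_nat A (\<lambda>k r. case r of None \<Rightarrow> None | Some y \<Rightarrow> G k y) n)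
   = rec_nat (enc A) (\<lambda>k v. if v = 0 then 0 else enc (G k (v - 1))) n"
proof (induction n)
  case (Suc n)
  show ?case
  proof (cases "rec_nat A (\<lambda>k r. case r of None \<Rightarrow> None | Some y \<Rightarrow> G k y) n")
    case None
    then have "rec_nat (enc A) (\<lambda>k v. if v = 0 then 0 else enc (G k (v - 1))) n = 0" using Suc.IH by simp
    then show ?thesis using None by simp
  next
    case (Some a)
    then have "rec_nat (enc A) (\<lambda>k v. if v = 0 then 0 else enc (G k (v - 1))) n = Suc a" using Suc.IH by simp
    then show ?thesis using Some by simp
  qed
qed simp

lemma rc_pred': "rc m k F \<Longrightarrow> rc m k (\<lambda>os xs. F os xs - Suc 0)"
  using rc_pred by simp

lemma enc_1_iff: "enc r = 1 \<longleftrightarrow> r = Some 0"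
  by (cases r) auto

lemma enc_2_iff: "2 \<le> enc r \<longleftrightarrow> (\<exists>k. r = Some (Suc k))"
  by (cases r) (auto, presburger)

lemma Sim_app: "length ys = l \<Longrightarrow> Sim Os f l os (ys @ b) = enc (ceval f (b ! 0) (Os os (drop 1 b)) ys)"
  by (simp add: Sim_def nth_append)

lemma sim_rc:
  assumes lenOs: "\<And>os env. length os = m \<Longrightarrow> length env = r \<Longrightarrow> length (Os os env) = nO"
    and orc: "\<And>i. i < nO \<Longrightarrow> rcP m (Suc r) (\<lambda>os a. (Os os (take r a) ! i) (a ! r))"
  shows "rc m (L + Suc r) (Sim Os g L)"
proof (induction g arbitrary: L)
  case Z
  show ?case by (rule rc_cong[OF rc_const[of m _ 1]]) (simp add: Sim_def)
next
  case S
  have "rc m (L + Suc r) (\<lambda>os a. if L = 0 then 0 else Suc (Suc (a!0)))"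
    by (cases L) (auto intro!: rc_const rc_Suc rc_proj)
  then show ?case
  proof (rule rc_cong)
    fix os :: "cantor list" and a :: "nat list" assume "length a = L + Suc r"
    then obtain x a' where "a = x # a'" by (cases a) auto
    then show "(if L = 0 then 0 else Suc (Suc (a!0))) = Sim Os S L os a"
      by (cases L) (auto simp: Sim_def)
  qed
next
  case (Proj i)
  have "rc m (L + Suc r) (\<lambda>os a. if i < L then Suc (a!i) else 0)"
    by (cases "i < L") (auto intro!: rc_const rc_Suc rc_proj)
  then show ?case by (rule rc_cong) (auto simp: Sim_def min_def)
next
  case (Orc i)
  have O: "rcP m (L + Suc r) (\<lambda>os a. (Os os (drop (Suc L) a) ! i) (a ! 0))" if il: "i < nO"
  proof -
    define "is" where "is = [Suc L..<Suc L + r] @ [0]"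
    have lis: "length is = Suc r" unfolding is_def by (simp del: upt_Suc)
    have sis: "\<forall>j\<in>set is. j < L + Suc r" unfolding is_def by (simp del: upt_Suc)
    have "rc m (L + Suc r) (\<lambda>os a. if (Os os (take r (map ((!) a) is)) ! i) (map ((!) a) is ! r) then 1 else 0)"
      using rc_reindex[of m "is" "\<lambda>os a. if (Os os (take r a) ! i) (a ! r) then 1 else 0" "L + Suc r"]
        orc[OF il] lis sis unfolding rcP_def by simp
    then show ?thesis unfolding rcP_def
    proof (rule rc_cong)
      fix os :: "cantor list" and a :: "nat list" assume lena: "length a = L + Suc r"
      then have "map ((!) a) [Suc L..<Suc L + r] = drop (Suc L) a" using map_nth_drop[of "Suc L" a] by simp
      then show "(if (Os os (take r (map ((!) a) is)) ! i) (map ((!) a) is ! r) then 1 else 0) =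
          (if (Os os (drop (Suc L) a) ! i) (a ! 0) then 1 else 0)"
        unfolding is_def using lena by (simp del: upt_Suc add: nth_append)
    qed
  qed
  have "rc m (L + Suc r) (\<lambda>os a. if L = 0 \<or> \<not> i < nO then 0 else
          if a!0 < a!L then Suc (if (Os os (drop (Suc L) a) ! i) (a!0) then 1 else 0) else 0)"
  proof (cases "L = 0 \<or> \<not> i < nO")
    case True then show ?thesis using rc_zero by simp
  next
    case False
    have "rc m (L + Suc r) (\<lambda>os a. if a!0 < a!L then Suc (if (Os os (drop (Suc L) a) ! i) (a!0) then 1 else 0) else 0)"
      by (intro rc_if rcP_less rc_proj rc_Suc rc_const O[unfolded rcP_def]) (use False in auto)
    then show ?thesis using False by simp
  qed
  then show ?case
  proof (rule rc_cong)
    fix os :: "cantor list" and a :: "nat list" assume len: "length os = m" "length a = L + Suc r"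
    show "(if L = 0 \<or> \<not> i < nO then 0 else
          if a!0 < a!L then Suc (if (Os os (drop (Suc L) a) ! i) (a!0) then 1 else 0) else 0) = Sim Os (Orc i) L os a"
    proof (cases L)
      case 0 then show ?thesis by (simp add: Sim_def)
    next
      case (Suc L')
      obtain x a' where a: "a = x # a'" using len by (cases a) auto
      have "length (Os os (drop (Suc L) a)) = nO" using lenOs len by simp
      then show ?thesis using a Suc by (auto simp: Sim_def)
    qed
  qed
next
  case (Cn f gs)
  define Fs where "Fs = map (\<lambda>g os a. Sim Os g L os a - 1) gs @ map (\<lambda>i os a. a ! i) [L..<L + Suc r]"
  have lFs: "length Fs = length gs + Suc r" by (simp add: Fs_def)
  have A: "rc m (L + Suc r) (\<lambda>os a. Sim Os f (length gs) os (map (\<lambda>F. F os a) Fs))"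
  proof (rule rc_cn_list)
    show "rc m (length Fs) (Sim Os f (length gs))" using Cn.IH(1)[of "length gs"] lFs by simp
  next
    fix F assume "F \<in> set Fs"
    then show "rc m (L + Suc r) F"
      unfolding Fs_def using Cn.IH(2) by (auto intro!: rc_pred' rc_proj)
  qed
  have B: "rcP m (L + Suc r) (\<lambda>os a. \<forall>g\<in>set gs. Sim Os g L os a \<noteq> 0)"
    by (rule rcP_all_list) (rule Cn.IH(2))
  have "rc m (L + Suc r) (\<lambda>os a. if \<forall>g\<in>set gs. Sim Os g L os a \<noteq> 0
        then Sim Os f (length gs) os (map (\<lambda>F. F os a) Fs) else 0)"
    by (rule rc_if[OF B A rc_const])
  then show ?case
  proof (rule rc_cong)
    fix os :: "cantor list" and a :: "nat list" assume len: "length os = m" "length a = L + Suc r"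
    have mF: "map (\<lambda>F. F os a) Fs = map (\<lambda>g. Sim Os g L os a - 1) gs @ drop L a"
      using map_nth_drop[of L a] len by (simp add: Fs_def comp_def)
    define t where "t = a ! L"
    define Ov where "Ov = Os os (drop (Suc L) a)"
    define xs where "xs = take L a"
    have simg: "Sim Os g L os a = enc (ceval g t Ov xs)" for g by (simp add: Sim_def t_def Ov_def xs_def)
    have dl: "drop L a ! 0 = t" "drop 1 (drop L a) = drop (Suc L) a" using len by (simp_all add: t_def)
    show "(if \<forall>g\<in>set gs. Sim Os g L os a \<noteq> 0 then Sim Os f (length gs) os (map (\<lambda>F. F os a) Fs) else 0)
      = Sim Os (Cn f gs) L os a"
    proof (cases "\<forall>g\<in>set gs. Sim Os g L os a \<noteq> 0")
      case True
      then have nn: "None \<notin> set (map (\<lambda>g. ceval g t Ov xs) gs)" by (auto simp: simg enc_0_iff)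
      have ys: "map (\<lambda>g. Sim Os g L os a - Suc 0) gs = map (\<lambda>g. the (ceval g t Ov xs)) gs"
        by (rule map_cong) (use True in \<open>auto simp: simg enc_def split: option.splits\<close>)
      show ?thesis using True nn
        by (simp add: mF ys Sim_app dl) (simp add: Sim_def t_def Ov_def xs_def)
    next
      case False
      then obtain g where "g \<in> set gs" "ceval g t Ov xs = None" by (auto simp: simg enc_0_iff)
      then have "None \<in> set (map (\<lambda>g. ceval g t Ov xs) gs)" by (metis image_eqI set_map)
      then show ?thesis using False by (simp add: Sim_def t_def Ov_def xs_def) auto
    qed
  qed
next
  case (Pr f g)
  show ?case
  proof (cases L)
    case 0
    show ?thesis by (rule rc_cong[OF rc_zero]) (simp add: Sim_def 0)
  next
    case (Suc L')
    define k' where "k' = L' + Suc r"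
    define Fs :: "(cantor list \<Rightarrow> nat list \<Rightarrow> nat) list" where "Fs = (\<lambda>os b. b!0) # (\<lambda>os b. b!1 - 1) # map (\<lambda>i os b. b ! i) [2..<Suc (Suc k')]"
    have lFs: "length Fs = Suc (Suc L') + Suc r" by (simp del: upt_Suc add: Fs_def k'_def)
    have G: "rc m (Suc (Suc k')) (\<lambda>os b. Sim Os g (Suc (Suc L')) os (map (\<lambda>F. F os b) Fs))"
    proof (rule rc_cn_list)
      show "rc m (length Fs) (Sim Os g (Suc (Suc L')))" using Pr.IH(2)[of "Suc (Suc L')"] lFs by simp
    next
      fix F assume "F \<in> set Fs"
      then show "rc m (Suc (Suc k')) F" unfolding Fs_def by (auto simp del: upt_Suc intro!: rc_pred' rc_proj)
    qed
    have H: "rc m (Suc (Suc k')) (\<lambda>os b. if b!1 = 0 then 0 else Sim Os g (Suc (Suc L')) os (map (\<lambda>F. F os b) Fs))"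
      by (intro rc_if rcP_eq rc_proj rc_const G) simp
    have F0: "rc m k' (Sim Os f L')" using Pr.IH(1)[of L'] by (simp add: k'_def)
    from rc_pr[OF F0 H] have "rc m (Suc k') (\<lambda>os a. rec_nat (Sim Os f L' os (tl a))
        (\<lambda>n y. if y = 0 then 0 else Sim Os g (Suc (Suc L')) os (map (\<lambda>F. F os (n # y # tl a)) Fs)) (hd a))"
      by simp
    then have "rc m (L + Suc r) (\<lambda>os a. rec_nat (Sim Os f L' os (tl a))
        (\<lambda>n y. if y = 0 then 0 else Sim Os g (Suc (Suc L')) os (map (\<lambda>F. F os (n # y # tl a)) Fs)) (hd a))"
      by (simp add: Suc k'_def)
    then show ?thesis
    proof (rule rc_cong)
      fix os :: "cantor list" and a :: "nat list" assume len: "length os = m" "length a = L + Suc r"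
      then obtain n a' where a: "a = n # a'" "length a' = k'" by (cases a) (auto simp: Suc k'_def)
      have mF: "map (\<lambda>F. F os (k # y # a')) Fs = k # (y - 1) # a'" for k y
        using map_nth_drop[of 2 "k # y # a'"] a(2) by (simp del: upt_Suc add: Fs_def comp_def)
      show "rec_nat (Sim Os f L' os (tl a))
        (\<lambda>n y. if y = 0 then 0 else Sim Os g (Suc (Suc L')) os (map (\<lambda>F. F os (n # y # tl a)) Fs)) (hd a)
        = Sim Os (Pr f g) L os a"
        unfolding a(1) Suc using a(2)
        by (simp add: mF Sim_def enc_rec k'_def cong: if_cong)
    qed
  qed
next
  case (Mn f)
  define k where "k = L + Suc r"
  have F1: "rc m (Suc k) (Sim Os f (Suc L))" using Mn.IH[of "Suc L"] by (simp add: k_def)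
  have P1: "rcP m (Suc (Suc k)) (\<lambda>os c. 2 \<le> Sim Os f (Suc L) os (c!0 # drop 2 c))"
    by (intro rcP_le rc_const rc_drop1 F1)
  have P2: "rcP m (Suc k) (\<lambda>os b. Sim Os f (Suc L) os b = 1 \<and> (\<forall>i<b!0. 2 \<le> Sim Os f (Suc L) os (i # tl b)))"
  proof (rule rcP_and)
    show "rcP m (Suc k) (\<lambda>os b. Sim Os f (Suc L) os b = 1)" by (intro rcP_eq F1 rc_const)
    show "rcP m (Suc k) (\<lambda>os b. \<forall>i<b!0. 2 \<le> Sim Os f (Suc L) os (i # tl b))"
      using rcP_ball[OF P1 rc_proj[of 0 "Suc k" m]] by (simp add: drop_Suc)
  qed
  have Cond: "rcP m k (\<lambda>os a. \<exists>n<a!L. Sim Os f (Suc L) os (n # a) = 1 \<and> (\<forall>i<n. 2 \<le> Sim Os f (Suc L) os (i # a)))"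
    using rcP_bex[OF P2 rc_proj[of L k m]] by (simp add: k_def)
  have P3: "rc m (Suc k) (\<lambda>os b. if \<forall>i<Suc (b!0). 2 \<le> Sim Os f (Suc L) os (i # tl b) then 1 else 0)"
    using rcP_ball[OF P1 rc_Suc[OF rc_proj[of 0 "Suc k" m]]] unfolding rcP_def by (simp add: drop_Suc)
  have Sum: "rc m k (\<lambda>os a. \<Sum>n<a!L. if \<forall>i<Suc n. 2 \<le> Sim Os f (Suc L) os (i # a) then 1 else 0)"
    using rc_bsum[OF P3 rc_proj[of L k m]] by (simp add: k_def)
  have "rc m k (\<lambda>os a. if \<exists>n<a!L. Sim Os f (Suc L) os (n # a) = 1 \<and> (\<forall>i<n. 2 \<le> Sim Os f (Suc L) os (i # a))
      then Suc (\<Sum>n<a!L. if \<forall>i<Suc n. 2 \<le> Sim Os f (Suc L) os (i # a) then 1 else 0) else 0)"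
    by (rule rc_if[OF Cond rc_Suc[OF Sum] rc_const])
  then show ?case unfolding k_def
  proof (rule rc_cong)
    fix os :: "cantor list" and a :: "nat list" assume len: "length os = m" "length a = L + Suc r"
    have hs: "Sim Os f (Suc L) os (n # a) = enc (ceval f (a!L) (Os os (drop (Suc L) a)) (n # take L a))" for n
      by (simp add: Sim_def)
    have e: "(\<forall>i<Suc n. P i) \<longleftrightarrow> (\<forall>i\<le>n. P i)" for P n by (auto simp: less_Suc_eq_le)
    show "(if \<exists>n<a!L. Sim Os f (Suc L) os (n # a) = 1 \<and> (\<forall>i<n. 2 \<le> Sim Os f (Suc L) os (i # a))
      then Suc (\<Sum>n<a!L. if \<forall>i<Suc n. 2 \<le> Sim Os f (Suc L) os (i # a) then 1 else 0) else 0)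
      = Sim Os (Mn f) L os a"
      by (simp only: hs enc_1_iff enc_2_iff e) (simp add: Sim_def, blast)
  qed
qed

lemma rcP_iff: "rcP m k P \<Longrightarrow> rcP m k Q \<Longrightarrow> rcP m k (\<lambda>os xs. P os xs = Q os xs)"
proof -
  assume P: "rcP m k P" and Q: "rcP m k Q"
  have "rcP m k (\<lambda>os xs. (P os xs \<and> Q os xs) \<or> (\<not> P os xs \<and> \<not> Q os xs))"
    by (intro rcP_or rcP_and rcP_not P Q)
  then show ?thesis by (rule rcP_cong) auto
qed

lemma sigma_from_rc:
  assumes H: "rc (length ps + 2) 2 H"
    and P: "\<And>x y. (x, y) \<in> P \<longleftrightarrow> (\<exists>N. \<forall>t. H (ps @ [x, y]) [t, N] \<noteq> 0)"
  shows "sigma02 ps P"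
proof -
  obtain c where c: "\<And>os xs. length os = length ps + 2 \<Longrightarrow> length xs = 2 \<Longrightarrow> reval os c xs (H os xs)"
    using H unfolding rc_def by blast
  have hl: "halts os (Mn c) [N] \<longleftrightarrow> (\<exists>t. H os [t, N] = 0)" if los: "length os = length ps + 2" for os N
  proof
    assume "halts os (Mn c) [N]"
    then obtain n where "reval os (Mn c) [N] n" unfolding halts_def by blast
    then have "reval os c [n, N] 0" by (cases rule: reval.cases) auto
    moreover have "reval os c [n, N] (H os [n, N])" using c[OF los] by simp
    ultimately have "H os [n, N] = 0" using reval_det by blast
    then show "\<exists>t. H os [t, N] = 0" by blast
  next
    assume "\<exists>t. H os [t, N] = 0"
    then obtain t0 where t0: "H os [t0, N] = 0" "\<forall>m<t0. H os [m, N] \<noteq> 0"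
      using exists_least_iff[of "\<lambda>t. H os [t, N] = 0"] by blast
    have "reval os c [t0, N] 0" using c[OF los, of "[t0, N]"] t0(1) by simp
    moreover have "\<forall>m<t0. \<exists>k. reval os c [m, N] (Suc k)"
    proof (intro allI impI)
      fix m assume "m < t0"
      then have "H os [m, N] \<noteq> 0" using t0(2) by blast
      then obtain k where "H os [m, N] = Suc k" using not0_implies_Suc by blast
      then show "\<exists>k. reval os c [m, N] (Suc k)" using c[OF los, of "[m, N]"] by auto
    qed
    ultimately have "reval os (Mn c) [N] t0" by (intro reval.mn) auto
    then show "halts os (Mn c) [N]" unfolding halts_def by blast
  qed
  show ?thesis unfolding sigma02_def
  proof (intro exI[of _ "Mn c"] allI)
    fix x y
    show "(x, y) \<in> P \<longleftrightarrow> (\<exists>n. \<not> halts (ps @ [x, y]) (Mn c) [n])"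
      using P hl[of "ps @ [x, y]"] by auto
  qed
qed

lemma rc_arity: "rc m k F \<Longrightarrow> k = k' \<Longrightarrow> rc m k' F" by simp

lemma rcP_arity: "rcP m k F \<Longrightarrow> k = k' \<Longrightarrow> rcP m k' F" by simp

lemma sim_real:
  "rc (lp + 2) 2 (\<lambda>os a. enc (ceval f (a ! 1) os [a ! 0]))"
proof -
  have "rc (lp + 2) (1 + Suc 0) (Sim (\<lambda>os env. os) f 1)"
    by (rule sim_rc) (auto intro: rcP_orc rc_proj)
  then have "rc (lp + 2) 2 (Sim (\<lambda>os env. os) f 1)" by (rule rc_arity) simp
  then show ?thesis
  proof (rule rc_cong, goal_cases)
    case (1 os a)
    then obtain u v where "a = [u, v]" using len2 by blast
    then show ?case by (simp add: Sim_def)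
  qed
qed

lemma rev_rc:
  "rc (lp + 2) 2 (\<lambda>os a. if (\<exists>i<a!1. (os!lp) i \<noteq> (os!Suc lp) i) \<and> (\<exists>j<Suc (a!1). ceval f (a!0) os [j] = None) then 1 else 0)"
proof -
  have S3: "rc (lp + 2) 3 (\<lambda>os b. enc (ceval f (b ! 1) os [b ! 0]))"
    using rc_reindex[OF rc_arity[OF sim_real[of lp f]], of "[0, 1]" 3] by simp
  have A0: "rcP (lp + 2) (Suc 2) (\<lambda>os b. enc (ceval f (b ! 1) os [b ! 0]) = 0)"
    by (rule rcP_arity[OF rcP_eq[OF S3 rc_const]]) simp
  have A1: "rc (lp + 2) 2 (\<lambda>os a. Suc (a!1))" by (intro rc_Suc rc_proj) simp
  have A: "rcP (lp + 2) 2 (\<lambda>os a. \<exists>j<Suc (a!1). enc (ceval f (a!0) os [j]) = 0)"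
    using rcP_bex[OF A0 A1] by simp
  have B0: "rcP (lp + 2) (Suc 2) (\<lambda>os b. \<not> ((os!lp) (b ! 0) = (os!Suc lp) (b ! 0)))"
    by (intro rcP_not rcP_iff rcP_orc rc_proj) simp_all
  have B1: "rc (lp + 2) 2 (\<lambda>os a. a!1)" by (intro rc_proj) simp
  have B: "rcP (lp + 2) 2 (\<lambda>os a. \<exists>i<a!1. \<not> ((os!lp) i = (os!Suc lp) i))"
    using rcP_bex[OF B0 B1] by simp
  have "rcP (lp + 2) 2 (\<lambda>os a. (\<exists>i<a!1. (os!lp) i \<noteq> (os!Suc lp) i) \<and> (\<exists>j<Suc (a!1). ceval f (a!0) os [j] = None))"
    using rcP_and[OF B A] by (rule rcP_cong) (auto simp: enc_0_iff)
  then show ?thesis unfolding rcP_def .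
qed

lemma bounded_T1:
  assumes "\<forall>j<n. \<exists>t. ceval f t os [j] \<noteq> None"
  shows "\<exists>T. \<forall>j<n. ceval f T os [j] \<noteq> None"
proof -
  from assms have "\<forall>j<n. \<exists>v t. ceval f t os [j] = Some v" by blast
  then obtain v where "\<forall>j<n. \<exists>t. ceval f t os [j] = Some (v j)" by metis
  then obtain T where "\<forall>j<n. ceval f T os [j] = Some (v j)" using bounded_T[of n f os "[]" v] by auto
  then show ?thesis by auto
qed

lemma rtrancl_equiv:
  assumes eq: "equiv UNIV E" and sub: "G \<subseteq> E"
  shows "G\<^sup>* \<subseteq> E"
proof
  fix p assume "p \<in> G\<^sup>*"
  then obtain x y where p: "p = (x, y)" "(x, y) \<in> G\<^sup>*" by (cases p) auto
  from p(2) have "(x, y) \<in> E"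
  proof (induction rule: rtrancl_induct)
    case base then show ?case using eq unfolding equiv_def refl_on_def by auto
  next
    case (step y z) then show ?case using eq sub unfolding equiv_def trans_def by blast
  qed
  then show "p \<in> E" using p by simp
qed

lemma rev_dir:
  assumes eq: "equiv UNIV E" and sE: "sigma02 ps E"
  shows "graphable (sigma02 ps) E"
proof -
  obtain f where hf: "\<And>x y. (x, y) \<in> E \<longleftrightarrow> (\<exists>n. \<not> halts (ps @ [x, y]) f [n])"
    using sE unfolding sigma02_def by blast
  define G where "G = E - Id"
  have symE: "sym E" using eq unfolding equiv_def by blast
  have "sym G" using symE unfolding G_def sym_def by blast
  moreover have "irrefl G" unfolding G_def irrefl_def by blast
  moreover have "G\<^sup>* = E"
  proof
    show "G\<^sup>* \<subseteq> E" using rtrancl_equiv[OF eq] unfolding G_def by blast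
    show "E \<subseteq> G\<^sup>*"
    proof
      fix p assume "p \<in> E"
      then show "p \<in> G\<^sup>*" unfolding G_def by (cases "fst p = snd p") auto
    qed
  qed
  moreover have "sigma02 ps G"
  proof (rule sigma_from_rc[OF rev_rc[of "length ps" f]])
    fix x y
    let ?os = "ps @ [x, y]"
    have osx: "?os ! length ps = x" "?os ! Suc (length ps) = y" by (simp_all add: nth_append)
    show "(x, y) \<in> G \<longleftrightarrow> (\<exists>N. \<forall>t. (if (\<exists>i<[t, N] ! 1. (?os ! length ps) i \<noteq> (?os ! Suc (length ps)) i) \<and>
                 (\<exists>j<Suc ([t, N] ! 1). ceval f ([t, N] ! 0) ?os [j] = None) then 1 else 0) \<noteq> (0::nat))"
    proof
      assume "(x, y) \<in> G"
      then have xy: "x \<noteq> y" "(x, y) \<in> E" unfolding G_def by auto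
      obtain n where n: "\<not> halts ?os f [n]" using hf xy(2) by blast
      then have nt: "\<forall>t. ceval f t ?os [n] = None" by (simp add: halts_ceval)
      obtain i where i: "x i \<noteq> y i" using xy(1) by blast
      define N where "N = max (Suc i) n"
      have iN: "i < N" "n < Suc N" unfolding N_def by auto
      have "\<forall>t. (\<exists>i<N. x i \<noteq> y i) \<and> (\<exists>j<Suc N. ceval f t ?os [j] = None)"
        using i nt iN by blast
      then show "\<exists>N. \<forall>t. (if (\<exists>i<[t, N] ! 1. (?os ! length ps) i \<noteq> (?os ! Suc (length ps)) i) \<and>
                 (\<exists>j<Suc ([t, N] ! 1). ceval f ([t, N] ! 0) ?os [j] = None) then 1 else 0) \<noteq> (0::nat)"
        by (intro exI[of _ N]) (simp add: osx)
    next
      assume "\<exists>N. \<forall>t. (if (\<exists>i<[t, N] ! 1. (?os ! length ps) i \<noteq> (?os ! Suc (length ps)) i) \<and>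
                 (\<exists>j<Suc ([t, N] ! 1). ceval f ([t, N] ! 0) ?os [j] = None) then 1 else 0) \<noteq> (0::nat)"
      then obtain N where N: "\<And>t. (\<exists>i<N. x i \<noteq> y i) \<and> (\<exists>j<Suc N. ceval f t ?os [j] = None)"
        by (auto simp: osx split: if_splits)
      have "x \<noteq> y" using N[of 0] by auto
      moreover have "\<exists>j<Suc N. \<forall>t. ceval f t ?os [j] = None"
      proof (rule ccontr)
        assume "\<not> ?thesis"
        then have "\<forall>j<Suc N. \<exists>t. ceval f t ?os [j] \<noteq> None" by auto
        then obtain T where "\<forall>j<Suc N. ceval f T ?os [j] \<noteq> None" using bounded_T1 by blast
        then show False using N[of T] by auto
      qed
      then obtain j where "\<forall>t. ceval f t ?os [j] = None" by blast
      then have "\<not> halts ?os f [j]" by (simp add: halts_ceval)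
      then have "(x, y) \<in> E" using hf by blast
      ultimately show "(x, y) \<in> G" unfolding G_def by auto
    qed
  qed
  ultimately show ?thesis unfolding graphable_def by blast
qed

definition zt :: "nat \<Rightarrow> (nat \<Rightarrow> bool) \<Rightarrow> nat \<Rightarrow> cantor" where
  "zt N W i = (\<lambda>m. W (m * Suc N + i))"

definition TB :: "recf \<Rightarrow> cantor list \<Rightarrow> cantor \<Rightarrow> cantor \<Rightarrow> nat \<Rightarrow> nat \<Rightarrow> (nat \<Rightarrow> bool) \<Rightarrow> bool" where
  "TB f ps x y N d W \<longleftrightarrow> (\<forall>m<d. zt N W 0 m = x m \<and> zt N W N m = y m) \<and>
     (\<forall>i<N. (\<forall>m<d. zt N W i m = zt N W (Suc i) m) \<or>
            (\<exists>j<Suc N. ceval f d (ps @ [zt N W i, zt N W (Suc i)]) [j] = None))"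

definition OsF :: "nat \<Rightarrow> cantor list \<Rightarrow> nat list \<Rightarrow> cantor list" where
  "OsF lp os env = take lp os @ [zt (env!2) (bit (env!0)) (env!1), zt (env!2) (bit (env!0)) (Suc (env!1))]"

lemma rc_lin:
  assumes "rc m k A" "rc m k B" "rc m k C"
  shows "rc m k (\<lambda>os xs. A os xs * Suc (B os xs) + C os xs)"
  by (intro rc_add rc_mult rc_Suc assms)

lemma sim_fwd:
  "rc (lp + 2) 5 (\<lambda>os q. enc (ceval f (q!3) (OsF lp os [q!2, q!1, q!4]) [q!0]))"
proof -
  have "rc (lp + 2) (1 + Suc 3) (Sim (OsF lp) f 1)"
  proof (rule sim_rc)
    fix os :: "cantor list" and env :: "nat list" assume "length os = lp + 2" "length env = 3"
    then show "length (OsF lp os env) = lp + 2" by (simp add: OsF_def)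
  next
    fix i assume i: "i < lp + 2"
    consider "i < lp" | "i = lp" | "i = Suc lp" using i by linarith
    then show "rcP (lp + 2) (Suc 3) (\<lambda>os a. (OsF lp os (take 3 a) ! i) (a ! 3))"
    proof cases
      case 1
      have "rcP (lp + 2) (Suc 3) (\<lambda>os a. (os ! i) (a ! 3))" using i by (intro rcP_orc rc_proj) auto
      then show ?thesis by (rule rcP_cong) (use 1 in \<open>simp add: OsF_def nth_append\<close>)
    next
      case 2
      have "rcP (lp + 2) (Suc 3) (\<lambda>os a. bit (a!0) (a!3 * Suc (a!2) + a!1))"
        by (intro rcP_bit rc_lin rc_proj) auto
      then show ?thesis by (rule rcP_cong) (use 2 in \<open>simp add: OsF_def nth_append zt_def\<close>)
    next
      case 3
      have "rcP (lp + 2) (Suc 3) (\<lambda>os a. bit (a!0) (a!3 * Suc (a!2) + Suc (a!1)))"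
        by (intro rcP_bit rc_lin rc_Suc rc_proj) auto
      then show ?thesis by (rule rcP_cong) (use 3 in \<open>simp add: OsF_def nth_append zt_def\<close>)
    qed
  qed
  then have "rc (lp + 2) (length [0, 3, 2, 1, 4::nat]) (Sim (OsF lp) f 1)" by (rule rc_arity) simp
  from rc_reindex[OF this, of 5] have "rc (lp + 2) 5 (\<lambda>os q. Sim (OsF lp) f 1 os [q!0, q!3, q!2, q!1, q!4])"
    by simp
  then show ?thesis by (rule rc_cong) (simp add: Sim_def)
qed

lemma fwd_rc:
  "rc (lp + 2) 2 (\<lambda>os a. if \<exists>e<(2::nat) ^ (Suc (a!1) * a!0). TB f (take lp os) (os!lp) (os!Suc lp) (a!1) (a!0) (bit e) then 1 else 0)"
proof -
  have D2: "rcP (lp + 2) (Suc 4) (\<lambda>os q. enc (ceval f (q!3) (OsF lp os [q!2, q!1, q!4]) [q!0]) = 0)"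
    using rcP_eq[OF sim_fwd[of lp f] rc_const[of _ _ 0]] by simp
  have D2b: "rcP (lp + 2) 4 (\<lambda>os c. \<exists>j<Suc (c!3). enc (ceval f (c!2) (OsF lp os [c!1, c!0, c!3]) [j]) = 0)"
    using rcP_bex[OF D2 rc_Suc[OF rc_proj[of 3 4]]] by simp
  have D1: "rcP (lp + 2) (Suc 4) (\<lambda>os q. bit (q!2) (q!0 * Suc (q!4) + q!1) = bit (q!2) (q!0 * Suc (q!4) + Suc (q!1)))"
    by (intro rcP_iff rcP_bit rc_lin rc_Suc rc_proj) auto
  have D1b: "rcP (lp + 2) 4 (\<lambda>os c. \<forall>m<c!2. bit (c!1) (m * Suc (c!3) + c!0) = bit (c!1) (m * Suc (c!3) + Suc (c!0)))"
    using rcP_ball[OF D1 rc_proj[of 2 4]] by simp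
  have C2b: "rcP (lp + 2) (Suc 3) (\<lambda>os c. (\<forall>m<c!2. bit (c!1) (m * Suc (c!3) + c!0) = bit (c!1) (m * Suc (c!3) + Suc (c!0)))
      \<or> (\<exists>j<Suc (c!3). enc (ceval f (c!2) (OsF lp os [c!1, c!0, c!3]) [j]) = 0))"
    using rcP_or[OF D1b D2b] by simp
  have C2: "rcP (lp + 2) 3 (\<lambda>os b. \<forall>i<b!2. (\<forall>m<b!1. bit (b!0) (m * Suc (b!2) + i) = bit (b!0) (m * Suc (b!2) + Suc i))
      \<or> (\<exists>j<Suc (b!2). enc (ceval f (b!1) (OsF lp os [b!0, i, b!2]) [j]) = 0))"
    using rcP_ball[OF C2b rc_proj[of 2 3]] by simp
  have C1b: "rcP (lp + 2) (Suc 3) (\<lambda>os c. bit (c!1) (c!0 * Suc (c!3) + 0) = (os!lp) (c!0) \<and>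
      bit (c!1) (c!0 * Suc (c!3) + c!3) = (os!Suc lp) (c!0))"
    by (intro rcP_and rcP_iff rcP_bit rcP_orc rc_lin rc_const rc_proj) auto
  have C1: "rcP (lp + 2) 3 (\<lambda>os b. \<forall>m<b!1. bit (b!0) (m * Suc (b!2) + 0) = (os!lp) m \<and>
      bit (b!0) (m * Suc (b!2) + b!2) = (os!Suc lp) m)"
    using rcP_ball[OF C1b rc_proj[of 1 3]] by simp
  have Body: "rcP (lp + 2) (Suc 2) (\<lambda>os b. TB f (take lp os) (os!lp) (os!Suc lp) (b!2) (b!1) (bit (b!0)))"
    using rcP_and[OF C1 C2]
    by (rule rcP_arity[OF rcP_cong]) (simp_all add: TB_def zt_def OsF_def enc_0_iff)
  have Bd: "rc (lp + 2) 2 (\<lambda>os a. 2 ^ (Suc (a!1) * a!0))"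
    by (intro rc_pow2 rc_mult rc_Suc rc_proj) auto
  show ?thesis using rcP_bex[OF Body Bd] unfolding rcP_def by simp
qed

lemma pos_lt: "i \<le> N \<Longrightarrow> m < d \<Longrightarrow> m * Suc N + i < Suc N * d"
proof -
  assume "i \<le> N" "m < d"
  then have "m * Suc N + i < Suc m * Suc N" by simp
  also have "\<dots> \<le> d * Suc N" using \<open>m < d\<close> by (intro mult_le_mono1) simp
  finally show ?thesis by (simp add: mult.commute)
qed

lemma TB_cong:
  assumes agree: "\<forall>p < Suc N * d. W p = W' p"
  shows "TB f ps x y N d W = TB f ps x y N d W'"
proof -
  have z: "zt N W i m = zt N W' i m" if "i \<le> N" "m < d" for i m
    using agree pos_lt[OF that] unfolding zt_def by simp
  have c: "ceval f d (ps @ [zt N W i, zt N W (Suc i)]) xs = ceval f d (ps @ [zt N W' i, zt N W' (Suc i)]) xs"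
    if "i < N" for i xs
  proof (rule ceval_cong)
    fix k x assume "k < length (ps @ [zt N W i, zt N W (Suc i)])" "x < d"
    then show "((ps @ [zt N W i, zt N W (Suc i)]) ! k) x = ((ps @ [zt N W' i, zt N W' (Suc i)]) ! k) x"
      using z[of i x] z[of "Suc i" x] that by (auto simp: nth_append nth_Cons' split: if_splits)
  qed simp
  show ?thesis unfolding TB_def by (simp add: z c)
qed

lemma TB_mono:
  assumes "TB f ps x y N (Suc d) W" shows "TB f ps x y N d W"
proof -
  have "ceval f d os xs = None" if "ceval f (Suc d) os xs = None" for os xs
  proof (rule ccontr)
    assume "ceval f d os xs \<noteq> None"
    then obtain v where "ceval f d os xs = Some v" by blast
    then have "ceval f (Suc d) os xs = Some v" by (rule ceval_mono) simp
    then show False using that by simp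
  qed
  then show ?thesis using assms unfolding TB_def by (meson less_SucI)
qed

lemma TB_mono_le:
  assumes "TB f ps x y N d' W" "d \<le> d'" shows "TB f ps x y N d W"
  using assms(2,1)
proof (induction rule: dec_induct)
  case (step n) then show ?case using TB_mono by blast
qed simp

lemma koenig:
  fixes B :: "nat \<Rightarrow> (nat \<Rightarrow> bool) \<Rightarrow> bool"
  assumes mono: "\<And>L W. B (Suc L) W \<Longrightarrow> B L W"
    and loc: "\<And>L W W'. \<forall>p<L. W p = W' p \<Longrightarrow> B L W \<Longrightarrow> B L W'"
    and all: "\<And>L. \<exists>W. B L W"
  shows "\<exists>W. \<forall>L. B L W"
proof -
  have monoK: "B L W" if "B (L + k) W" for L k W
    using that
  proof (induction k)
    case (Suc k) then show ?case using mono[of "L + k" W] by simp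
  qed simp
  have monoL: "B L W" if "B L' W" "L \<le> L'" for L L' W
    using monoK[of L "L' - L" W] that by simp
  define Ext where "Ext L w \<longleftrightarrow> (\<forall>L'\<ge>L. \<exists>W'. (\<forall>p<L. W' p = w p) \<and> B L' W')" for L w
  have ext0: "Ext 0 w" for w using all unfolding Ext_def by blast
  have step: "Ext (Suc L) (w(L := False)) \<or> Ext (Suc L) (w(L := True))" if E: "Ext L w" for L w
  proof (rule ccontr)
    assume N: "\<not> ?thesis"
    have N1: "\<not> Ext (Suc L) (w(L := False))" and N2: "\<not> Ext (Suc L) (w(L := True))" using N by blast+
    from N1 obtain L1 where L1: "L1 \<ge> Suc L" "\<forall>W'. \<not> ((\<forall>p<Suc L. W' p = (w(L:=False)) p) \<and> B L1 W')"
      unfolding Ext_def by blast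
    from N2 obtain L2 where L2: "L2 \<ge> Suc L" "\<forall>W'. \<not> ((\<forall>p<Suc L. W' p = (w(L:=True)) p) \<and> B L2 W')"
      unfolding Ext_def by blast
    have "max L1 L2 \<ge> L" using L1(1) by simp
    with E obtain W' where W': "\<forall>p<L. W' p = w p" "B (max L1 L2) W'"
      unfolding Ext_def by blast
    show False
    proof (cases "W' L")
      case True
      have "\<forall>p<Suc L. W' p = (w(L:=True)) p" using W'(1) True by (auto simp: less_Suc_eq)
      moreover have "B L2 W'" using monoL[OF W'(2)] by simp
      ultimately show False using L2(2) by blast
    next
      case False
      have "\<forall>p<Suc L. W' p = (w(L:=False)) p" using W'(1) False by (auto simp: less_Suc_eq)
      moreover have "B L1 W'" using monoL[OF W'(2)] by simp
      ultimately show False using L1(2) by blast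
    qed
  qed
  define ws where "ws = rec_nat (\<lambda>_. False) (\<lambda>L w. if Ext (Suc L) (w(L := False)) then w(L := False) else w(L := True))"
  have wsS: "ws (Suc L) = (if Ext (Suc L) ((ws L)(L := False)) then (ws L)(L := False) else (ws L)(L := True))" for L
    by (simp add: ws_def)
  have extws: "Ext L (ws L)" for L
  proof (induction L)
    case 0 then show ?case using ext0 by simp
  next
    case (Suc L)
    show ?case
    proof (cases "Ext (Suc L) ((ws L)(L := False))")
      case True then show ?thesis by (simp only: wsS if_True)
    next
      case False
      then have T: "Ext (Suc L) ((ws L)(L := True))" using step[OF Suc.IH] by blast
      show ?thesis using False T by (simp only: wsS if_False)
    qed
  qed
  have agree1: "ws (Suc L) p = ws L p" if "p < L" for L p using that wsS[of L] by auto
  have agree: "ws L' p = ws L p" if "p < L" "L \<le> L'" for L L' p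
    using that(2)
  proof (induction rule: dec_induct)
    case (step n) then show ?case using agree1[of p n] that(1) by simp
  qed simp
  define W where "W p = ws (Suc p) p" for p
  have WL: "\<forall>p<L. ws L p = W p" for L unfolding W_def using agree by (metis Suc_leI lessI)
  have "B L W" for L
  proof -
    obtain W' where "\<forall>p<L. W' p = ws L p" "B L W'" using extws[of L] unfolding Ext_def by blast
    then show ?thesis using loc[of L W' W] WL[of L] by simp
  qed
  then show ?thesis by blast
qed

lemma bits_of:
  fixes W :: "nat \<Rightarrow> bool"
  shows "\<exists>e<(2::nat) ^ L. \<forall>p<L. bit e p = W p"
proof -
  define e :: nat where "e = horner_sum of_bool 2 (map W [0..<L])"
  have "e < 2 ^ L" unfolding e_def using horner_sum_of_bool_2_less[of "map W [0..<L]"] by simp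
  moreover have "\<forall>p<L. bit e p = W p" unfolding e_def by (simp add: bit_horner_sum_bit_iff)
  ultimately show ?thesis by blast
qed

lemma fwd_back:
  assumes hf: "\<And>x y. (x, y) \<in> G \<longleftrightarrow> (\<exists>n. \<not> halts (ps @ [x, y]) f [n])"
    and H: "\<forall>d. \<exists>e<(2::nat) ^ (Suc N * d). TB f ps x y N d (bit e)"
  shows "(x, y) \<in> G\<^sup>*"
proof -
  define B where "B L W \<longleftrightarrow> TB f ps x y N (L div Suc N) W" for L W
  have "\<exists>W. \<forall>L. B L W"
  proof (rule koenig)
    fix L W assume "B (Suc L) W"
    then show "B L W" unfolding B_def by (rule TB_mono_le) (simp add: div_le_mono)
  next
    fix L W W' assume ag: "\<forall>p<L. W p = W' p" and b: "B L W"
    have "Suc N * (L div Suc N) \<le> L" by (metis div_times_less_eq_dividend mult.commute)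
    then have "\<forall>p<Suc N * (L div Suc N). W p = W' p" using ag by simp
    then show "B L W'" using b TB_cong unfolding B_def by blast
  next
    fix L
    from H obtain e :: nat where "TB f ps x y N (L div Suc N) (bit e)" by blast
    then show "\<exists>W. B L W" unfolding B_def by blast
  qed
  then obtain W where W: "\<And>L. B L W" by blast
  have dd: "Suc N * d div Suc N = d" for d by (metis nonzero_mult_div_cancel_left zero_less_Suc less_not_refl2)
  have TBd: "TB f ps x y N d W" for d using W[of "Suc N * d"] unfolding B_def dd .
  define z where "z = zt N W"
  have zx: "z 0 = x"
  proof
    fix m show "z 0 m = x m" using TBd[of "Suc m"] unfolding TB_def z_def by simp
  qed
  have zy: "z N = y"
  proof
    fix m show "z N m = y m" using TBd[of "Suc m"] unfolding TB_def z_def by simp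
  qed
  have link: "(z i, z (Suc i)) \<in> G\<^sup>*" if iN: "i < N" for i
  proof (cases "z i = z (Suc i)")
    case True then show ?thesis by simp
  next
    case False
    then obtain m0 where m0: "z i m0 \<noteq> z (Suc i) m0" by blast
    let ?os = "ps @ [z i, z (Suc i)]"
    have big: "\<exists>j<Suc N. ceval f d ?os [j] = None" if "m0 < d" for d
      using TBd[of d] iN m0 that unfolding TB_def z_def by blast
    have "\<exists>j<Suc N. \<forall>t. ceval f t ?os [j] = None"
    proof (rule ccontr)
      assume "\<not> ?thesis"
      then have "\<forall>j<Suc N. \<exists>t. ceval f t ?os [j] \<noteq> None" by blast
      then obtain T where T: "\<forall>j<Suc N. ceval f T ?os [j] \<noteq> None" using bounded_T1 by blast
      have "m0 < max T (Suc m0)" by simp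
      then obtain j where j: "j < Suc N" "ceval f (max T (Suc m0)) ?os [j] = None" using big[of "max T (Suc m0)"] by blast
      obtain v where "ceval f T ?os [j] = Some v" using T j(1) by blast
      then have "ceval f (max T (Suc m0)) ?os [j] = Some v" by (rule ceval_mono) simp
      then show False using j(2) by simp
    qed
    then obtain j where "\<forall>t. ceval f t ?os [j] = None" by blast
    then have "\<not> halts ?os f [j]" by (simp add: halts_ceval)
    then have "(z i, z (Suc i)) \<in> G" using hf by blast
    then show ?thesis by simp
  qed
  have "(z 0, z k) \<in> G\<^sup>*" if "k \<le> N" for k
    using that
  proof (induction k)
    case (Suc k)
    then have "(z 0, z k) \<in> G\<^sup>*" "(z k, z (Suc k)) \<in> G\<^sup>*" using link by simp_all
    then show ?case by (rule rtrancl_trans)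
  qed simp
  then show ?thesis using zx zy by (metis le_refl)
qed

lemma fwd_forth:
  assumes hf: "\<And>x y. (x, y) \<in> G \<longleftrightarrow> (\<exists>n. \<not> halts (ps @ [x, y]) f [n])"
    and xy: "(x, y) \<in> G\<^sup>*"
  shows "\<exists>N. \<forall>d. \<exists>e<(2::nat) ^ (Suc N * d). TB f ps x y N d (bit e)"
proof -
  obtain k where "(x, y) \<in> G ^^ k" using xy rtrancl_power by blast
  then obtain z where z: "z 0 = x" "z k = y" "\<forall>i<k. (z i, z (Suc i)) \<in> G"
    unfolding relpow_fun_conv by blast
  have "\<forall>i<k. \<exists>n. \<not> halts (ps @ [z i, z (Suc i)]) f [n]" using z(3) hf by blast
  then obtain nn where nn: "\<forall>i<k. \<not> halts (ps @ [z i, z (Suc i)]) f [nn i]" by metis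
  define N where "N = k + (\<Sum>i<k. nn i)"
  have kN: "k \<le> N" unfolding N_def by simp
  have nnN: "nn i \<le> N" if "i < k" for i
  proof -
    have "nn i \<le> (\<Sum>i<k. nn i)" using that by (intro member_le_sum) auto
    then show ?thesis unfolding N_def by simp
  qed
  define z' where "z' i = (if i \<le> k then z i else y)" for i
  have z'0: "z' 0 = x" using z(1) by (simp add: z'_def)
  have z'N: "z' N = y" using z(2) kN by (auto simp: z'_def)
  have z'big: "z' i = y" if "k \<le> i" for i using z(2) that by (auto simp: z'_def)
  have "\<exists>e<(2::nat) ^ (Suc N * d). TB f ps x y N d (bit e)" for d
  proof -
    define W where "W p = z' (p mod Suc N) (p div Suc N)" for p
    have ztW: "zt N W i = z' i" if "i \<le> N" for i
    proof
      fix m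
      have i: "i < Suc N" using that by simp
      have "(m * Suc N + i) mod Suc N = i" by (simp only: mod_mult_self3) (simp add: i)
      moreover have "(m * Suc N + i) div Suc N = m" using div_mult_self3[of "Suc N" m i] i by simp
      ultimately show "zt N W i m = z' i m" unfolding zt_def W_def by simp
    qed
    have "TB f ps x y N d W" unfolding TB_def
    proof (intro conjI allI impI)
      fix m assume "m < d"
      show "zt N W 0 m = x m" using ztW[of 0] z'0 by simp
      show "zt N W N m = y m" using ztW[of N] z'N by simp
    next
      fix i assume iN: "i < N"
      show "(\<forall>m<d. zt N W i m = zt N W (Suc i) m) \<or> (\<exists>j<Suc N. ceval f d (ps @ [zt N W i, zt N W (Suc i)]) [j] = None)"
      proof (cases "i < k")
        case True
        have "z' i = z i" "z' (Suc i) = z (Suc i)" using True by (simp_all add: z'_def)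
        moreover have "ceval f d (ps @ [z i, z (Suc i)]) [nn i] = None"
          using nn True halts_ceval by blast
        moreover have "nn i < Suc N" using nnN[OF True] by simp
        ultimately show ?thesis using ztW[of i] ztW[of "Suc i"] iN by auto
      next
        case False
        then show ?thesis using ztW[of i] ztW[of "Suc i"] iN z'big[of i] z'big[of "Suc i"] by simp
      qed
    qed
    moreover obtain e where e: "e < (2::nat) ^ (Suc N * d)" "\<forall>p<Suc N * d. bit e p = W p"
      using bits_of by blast
    ultimately have "TB f ps x y N d (bit e)" using TB_cong[of N d "bit e" W] by simp
    then show ?thesis using e(1) by blast
  qed
  then show ?thesis by blast
qed

lemma fwd_dir:
  assumes "graphable (sigma02 ps) E"
  shows "sigma02 ps E"
proof -
  obtain G where G: "sigma02 ps G" "G\<^sup>* = E" using assms unfolding graphable_def by blast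
  obtain f where hf: "\<And>x y. (x, y) \<in> G \<longleftrightarrow> (\<exists>n. \<not> halts (ps @ [x, y]) f [n])"
    using G(1) unfolding sigma02_def by blast
  show ?thesis
  proof (rule sigma_from_rc[OF fwd_rc[of "length ps" f]])
    fix x y
    let ?os = "ps @ [x, y]"
    have osx: "take (length ps) ?os = ps" "?os ! length ps = x" "?os ! Suc (length ps) = y"
      by (simp_all add: nth_append)
    have "(x, y) \<in> E \<longleftrightarrow> (\<exists>N. \<forall>d. \<exists>e<(2::nat) ^ (Suc N * d). TB f ps x y N d (bit e))"
      using fwd_back[OF hf] fwd_forth[OF hf] G(2) by blast
    then show "(x, y) \<in> E \<longleftrightarrow> (\<exists>N. \<forall>t. (if \<exists>e<(2::nat) ^ (Suc ([t, N] ! 1) * [t, N] ! 0).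
        TB f (take (length ps) ?os) (?os ! length ps) (?os ! Suc (length ps)) ([t, N] ! 1) ([t, N] ! 0) (bit e)
        then 1 else 0) \<noteq> (0::nat))"
      by (simp only: osx) simp
  qed
qed

lemma main_equiv:
  assumes "equiv UNIV E"
  shows "graphable (sigma02 ps) E \<longleftrightarrow> sigma02 ps E"
  using fwd_dir rev_dir[OF assms] by blast

theorem theorem3p10:
  fixes E :: "(cantor \<times> cantor) set"
  assumes "equiv UNIV E"
  shows "(graphable (sigma02 []) E \<longleftrightarrow> sigma02 [] E)
       \<and> (\<forall>a :: cantor. graphable (sigma02 [a]) E \<longleftrightarrow> sigma02 [a] E)"
  using main_equiv[OF assms] by blast

end
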